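(* Let $i\geqslant 1$ and $d\geqslant 4$, $d\neq 6$, be integers. For $q=2,\dots,[d/2]$ set $$E_q=\binom{d+i+1}{i+1}-\binom{d-2q+i+1}{i+1}-\binom{q+i+1}{i+1}.$$ Then $\min\{E_q\mid q=2,\dots,[d/2]\}$ is attained at $q=2$.
   Context: $[x]$ denotes the integer part of $x$. *)

theory Defs
  imports Main
begin

definition E :: "nat \<Rightarrow> nat \<Rightarrow> nat \<Rightarrow> int" where
  "E d i q = int ((d + i + 1) choose (i + 1)) - int ((d - 2*q + i + 1) choose (i + 1))
             - int ((q + i + 1) choose (i + 1))"

end

theory Submission
  imports Defs
begin

lemma ch_step: "(m choose k) \<le> (Suc m choose k)"
  by (cases k) auto

lemma ch_mono: "m \<le> m' \<Longrightarrow> (m choose k) \<le> (m' choose k)"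
  by (induction m' rule: dec_induct) (auto intro: order_trans[OF _ ch_step])

lemma F_suc: "(Suc x + Suc k choose Suc k) = (x + Suc k choose Suc k) + (x + Suc k choose k)"
  by simp

lemma maj:
  assumes "x \<le> y"
  shows "(x + j + Suc k choose Suc k) + (y + Suc k choose Suc k)
       \<le> (x + Suc k choose Suc k) + (y + j + Suc k choose Suc k)"
proof (induction j)
  case 0 then show ?case by simp
next
  case (Suc j)
  have a: "(x + Suc j + Suc k choose Suc k) = (x + j + Suc k choose Suc k) + (x + j + Suc k choose k)"
    using F_suc[of "x+j" k] by simp
  have b: "(y + Suc j + Suc k choose Suc k) = (y + j + Suc k choose Suc k) + (y + j + Suc k choose k)"
    using F_suc[of "y+j" k] by simp
  have c: "(x + j + Suc k choose k) \<le> (y + j + Suc k choose k)"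
    using assms by (intro ch_mono) simp
  show ?case using Suc a b c by linarith
qed

lemma key:
  fixes i d q :: nat
  assumes "i \<ge> 1" "d \<ge> 4" "d \<noteq> 6" "2 \<le> q" "q \<le> d div 2"
  shows "((d - 2*q + i + 1) choose (i + 1)) + ((q + i + 1) choose (i + 1))
       \<le> ((d - 2*2 + i + 1) choose (i + 1)) + ((2 + i + 1) choose (i + 1))"
proof -
  define F where "F u = (u + i + 1 choose (i + 1))" for u
  have Fe: "F u = (u + Suc i choose Suc i)" for u unfolding F_def by simp
  have majF: "F (x + j) + F y \<le> F x + F (y + j)" if "x \<le> y" for x y j
    unfolding Fe using maj[OF that] .
  have mono: "F u \<le> F v" if "u \<le> v" for u v
    unfolding F_def by (rule ch_mono) (use that in simp)
  define a where "a = d - 2*q"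
  have ad: "a + 2*q = d" using assms a_def by auto
  have goal: "F a + F q \<le> F (d - 4) + F 2"
  proof (cases "q \<le> a")
    case True
    have "F (2 + (q-2)) + F a \<le> F 2 + F (a + (q-2))"
      by (rule majF) (use True assms in auto)
    moreover have "2 + (q-2) = q" using assms by simp
    moreover have "F (a + (q-2)) \<le> F (d - 4)"
      by (rule mono) (use ad assms in auto)
    ultimately show ?thesis by simp
  next
    case False
    show ?thesis
    proof (cases "a \<ge> 2")
      case True
      have "F (2 + (a-2)) + F q \<le> F 2 + F (q + (a-2))"
        by (rule majF) (use True False in auto)
      moreover have "2 + (a-2) = a" using True by simp
      moreover have "F (q + (a-2)) \<le> F (d - 4)"
        by (rule mono) (use ad assms True in auto)
      ultimately show ?thesis by simp
    next
      case a2: False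
      show ?thesis
      proof (cases "q = 2")
        case True
        then have "a = d - 4" using a_def by simp
        then show ?thesis using True by simp
      next
        case q2: False
        have "q \<le> d - 4" using ad a2 q2 assms by auto
        then have "F q \<le> F (d - 4)" by (rule mono)
        moreover have "F a \<le> F 2"
          by (rule mono) (use a2 in auto)
        ultimately show ?thesis by simp
      qed
    qed
  qed
  then show ?thesis unfolding F_def a_def by simp
qed

theorem lemma1p1:
  fixes i d :: nat
  assumes "i \<ge> 1" and "d \<ge> 4" and "d \<noteq> 6"
  shows "E d i 2 = Min ((\<lambda>q. E d i q) ` {2..d div 2})"
proof -
  have mem: "2 \<in> {2..d div 2}" using assms by auto
  have le: "E d i 2 \<le> E d i q" if "q \<in> {2..d div 2}" for q
    using key[OF assms, of q] that unfolding E_def by auto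
  show ?thesis
    by (rule sym, rule Min_eqI) (use mem le in auto)
qed

end
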